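(* Let $m,n\ge 1$ and let $\Gamma$ be an acyclic $(m+n-1)$-graph such that the graph $\Delta_0(\Gamma)$ (defined in the context) is also acyclic. If $\Delta_1(\Gamma)$ has $s$ connected components and $\Delta_0(\Gamma)$ has $t$ connected components, then $\Gamma$ has exactly $s+t-1$ connected components.
   Context: For $N\ge1$, an $N$-graph is a graph with vertex set $\{1,\dots,N\}$ and a finite collection of oriented edges between distinct vertices (multiple edges allowed, no loops). It is acyclic if it contains no unoriented cycle (in particular, no two edges join the same pair of vertices). For an $(m+n-1)$-graph $\Gamma$, group its vertices as $\{1,\dots,m\},\{m+1\},\dots,\{m+n-1\}$. Then $\Delta_1(\Gamma)$ is the $m$-graph which is the subgraph of $\Gamma$ on vertices $1,\dots,m$ with all edges of $\Gamma$ among them, and $\Delta_0(\Gamma)$ is the $n$-graph obtained by clasping the vertices $1,\dots,m$ into a single vertex labeled $1$ (vertex $a\ge m+1$ becomes vertex $a-m+1$), keeping every edge of $\Gamma$ whose endpoints lie in different groups (as an edge between the images of its endpoints) and discarding the edges among $1,\dots,m$. *)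

theory Defs
  imports Main
begin

text \<open>An N-graph: vertex set {1..N}; edges are a finite list (indexed collection)
  of oriented edges (a,b) from a to b, with a \<noteq> b; multiple edges allowed.\<close>

type_synonym ngraph = "(nat \<times> nat) list"

definition is_ngraph :: "nat \<Rightarrow> ngraph \<Rightarrow> bool" where
  "is_ngraph N E \<longleftrightarrow> (\<forall>(a,b)\<in>set E. a \<in> {1..N} \<and> b \<in> {1..N} \<and> a \<noteq> b)"

definition joins :: "nat \<times> nat \<Rightarrow> nat \<Rightarrow> nat \<Rightarrow> bool" where
  "joins e u v \<longleftrightarrow> e = (u, v) \<or> e = (v, u)"

definition has_cycle :: "ngraph \<Rightarrow> bool" where
  "has_cycle E \<longleftrightarrow> (\<exists>es vs. length es = length vs \<and> 2 \<le> length es \<and>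
      distinct es \<and> distinct vs \<and> (\<forall>i\<in>set es. i < length E) \<and>
      (\<forall>i<length es. joins (E ! (es ! i)) (vs ! i) (vs ! ((i + 1) mod length es))))"

definition acyclic_graph :: "ngraph \<Rightarrow> bool" where
  "acyclic_graph E \<longleftrightarrow> \<not> has_cycle E"

definition adj :: "ngraph \<Rightarrow> nat \<Rightarrow> nat \<Rightarrow> bool" where
  "adj E u v \<longleftrightarrow> (\<exists>e\<in>set E. joins e u v)"

definition connected_in :: "ngraph \<Rightarrow> nat \<Rightarrow> nat \<Rightarrow> bool" where
  "connected_in E = (adj E)\<^sup>*\<^sup>*"

definition num_components :: "nat \<Rightarrow> ngraph \<Rightarrow> nat" where
  "num_components N E =
     card ({1..N} // {(u, v). u \<in> {1..N} \<and> v \<in> {1..N} \<and> connected_in E u v})"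

definition Delta1 :: "nat \<Rightarrow> ngraph \<Rightarrow> ngraph" where
  "Delta1 m E = filter (\<lambda>(a, b). a \<le> m \<and> b \<le> m) E"

definition clasp :: "nat \<Rightarrow> nat \<Rightarrow> nat" where
  "clasp m a = (if a \<le> m then 1 else a - m + 1)"

definition Delta0 :: "nat \<Rightarrow> ngraph \<Rightarrow> ngraph" where
  "Delta0 m E = map (\<lambda>(a, b). (clasp m a, clasp m b))
                  (filter (\<lambda>(a, b). \<not> (a \<le> m \<and> b \<le> m)) E)"

end

theory Submission
  imports Defs
begin


lemma adj_sym: "adj E u v = adj E v u"
  unfolding adj_def joins_def by blast

lemma conn_refl: "connected_in E u u"
  unfolding connected_in_def by simp

lemma conn_trans: "connected_in E u v \<Longrightarrow> connected_in E v w \<Longrightarrow> connected_in E u w"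
  unfolding connected_in_def by (rule rtranclp_trans)

lemma conn_sym: "connected_in E u v \<Longrightarrow> connected_in E v u"
  unfolding connected_in_def
proof (induction rule: rtranclp_induct)
  case base then show ?case by simp
next
  case (step y z)
  then show ?case using adj_sym by (metis converse_rtranclp_into_rtranclp)
qed

lemma conn_mono_cons: "connected_in E u v \<Longrightarrow> connected_in (x#E) u v"
  unfolding connected_in_def
proof (induction rule: rtranclp_induct)
  case base then show ?case by simp
next
  case (step y z)
  then have "adj (x#E) y z" unfolding adj_def by auto
  then show ?case using step by auto
qed

lemma conn_edge: "connected_in ((a,b)#E) a b"
  unfolding connected_in_def adj_def joins_def by auto

lemma conn_cons: "connected_in ((a,b)#E) u v \<longleftrightarrow>
   connected_in E u v \<or> (connected_in E u a \<and> connected_in E b v) \<or> (connected_in E u b \<and> connected_in E a v)"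
proof
  assume "connected_in ((a,b)#E) u v"
  then show "connected_in E u v \<or> (connected_in E u a \<and> connected_in E b v) \<or> (connected_in E u b \<and> connected_in E a v)"
    unfolding connected_in_def[of "(a,b)#E"]
  proof (induction rule: rtranclp_induct)
    case base then show ?case by (simp add: conn_refl)
  next
    case (step y z)
    from step(2) have "adj E y z \<or> (y = a \<and> z = b) \<or> (y = b \<and> z = a)"
      unfolding adj_def joins_def by auto
    moreover have "adj E y z \<Longrightarrow> connected_in E y z" unfolding connected_in_def by auto
    ultimately show ?case using step(3) conn_trans conn_sym conn_refl by metis
  qed
next
  assume "connected_in E u v \<or> (connected_in E u a \<and> connected_in E b v) \<or> (connected_in E u b \<and> connected_in E a v)"
  moreover have "connected_in ((a,b)#E) a b" "connected_in ((a,b)#E) b a" using conn_edge conn_sym by auto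
  ultimately show "connected_in ((a,b)#E) u v" using conn_mono_cons conn_trans by metis
qed

definition CC :: "nat \<Rightarrow> ngraph \<Rightarrow> nat \<Rightarrow> nat set" where
  "CC N E x = {v \<in> {1..N}. connected_in E x v}"

lemma quot_eq: "{1..N} // {(u, v). u \<in> {1..N} \<and> v \<in> {1..N} \<and> connected_in E u v} = CC N E ` {1..N}"
  unfolding quotient_def CC_def by auto

lemma num_eq: "num_components N E = card (CC N E ` {1..N})"
  unfolding num_components_def quot_eq ..

lemma CC_eq: "u \<in> {1..N} \<Longrightarrow> v \<in> {1..N} \<Longrightarrow> CC N E u = CC N E v \<longleftrightarrow> connected_in E u v"
  unfolding CC_def using conn_refl conn_sym conn_trans by blast

lemma quot_merge:
  assumes a: "a \<in> {1..N}" and b: "b \<in> {1..N}" and nc: "\<not> connected_in E a b"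
  shows "card (CC N ((a,b)#E) ` {1..N}) + 1 = card (CC N E ` {1..N})"
proof -
  let ?A = "{1..N}"
  let ?C = "CC N E" and ?C' = "CC N ((a,b)#E)"
  have img: "?C' ` ?A = insert (?C a \<union> ?C b) (?C ` ?A - {?C a, ?C b})"
  proof (rule set_eqI, rule iffI)
    fix X assume "X \<in> ?C' ` ?A"
    then obtain u where u: "u \<in> ?A" "X = ?C' u" by auto
    show "X \<in> insert (?C a \<union> ?C b) (?C ` ?A - {?C a, ?C b})"
    proof (cases "connected_in E u a \<or> connected_in E u b")
      case True
      have "X = ?C a \<union> ?C b"
        unfolding u CC_def conn_cons using True conn_sym conn_trans by blast
      then show ?thesis by simp
    next
      case False
      have "X = ?C u"
        unfolding u CC_def conn_cons using False conn_sym conn_trans by blast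
      moreover have "?C u \<noteq> ?C a" "?C u \<noteq> ?C b" using CC_eq u a b False by auto
      ultimately show ?thesis using u by auto
    qed
  next
    fix X assume X: "X \<in> insert (?C a \<union> ?C b) (?C ` ?A - {?C a, ?C b})"
    show "X \<in> ?C' ` ?A"
    proof (cases "X = ?C a \<union> ?C b")
      case True
      have "?C' a = ?C a \<union> ?C b"
        unfolding CC_def conn_cons using conn_sym conn_trans conn_refl by blast
      then show ?thesis using True a by auto
    next
      case False
      then have X1: "X \<in> ?C ` ?A" "X \<noteq> ?C a" "X \<noteq> ?C b" using X by auto
      then obtain u where u0: "u \<in> ?A" "X = ?C u" by blast
      then have u: "u \<in> ?A" "X = ?C u" "?C u \<noteq> ?C a" "?C u \<noteq> ?C b" using X1 by auto
      then have nn: "\<not> connected_in E u a" "\<not> connected_in E u b" using CC_eq a b by auto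
      have "?C' u = ?C u"
        unfolding CC_def conn_cons using nn conn_sym conn_trans by blast
      then show ?thesis using u by auto
    qed
  qed
  have ne: "?C a \<noteq> ?C b" using CC_eq a b nc by auto
  have notin: "?C a \<union> ?C b \<notin> ?C ` ?A - {?C a, ?C b}"
  proof
    assume "?C a \<union> ?C b \<in> ?C ` ?A - {?C a, ?C b}"
    then have X1: "?C a \<union> ?C b \<in> ?C ` ?A" "?C a \<union> ?C b \<noteq> ?C a" by auto
    then obtain u where u0: "u \<in> ?A" "?C a \<union> ?C b = ?C u" by blast
    then have u: "u \<in> ?A" "?C a \<union> ?C b = ?C u" "?C u \<noteq> ?C a" using X1 by auto
    have "a \<in> ?C a" using a conn_refl unfolding CC_def by auto
    then have "a \<in> ?C u" using u by auto
    then have "connected_in E u a" unfolding CC_def by auto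
    then show False using u CC_eq a by auto
  qed
  have sub: "{?C a, ?C b} \<subseteq> ?C ` ?A" using a b by auto
  have fin: "finite (?C ` ?A)" by simp
  have c2: "card {?C a, ?C b} = 2" using ne by simp
  have "card (?C ` ?A - {?C a, ?C b}) = card (?C ` ?A) - 2"
    using card_Diff_subset[OF _ sub] c2 by simp
  moreover have "card {?C a, ?C b} \<le> card (?C ` ?A)" using card_mono[OF fin sub] .
  ultimately show ?thesis unfolding img using notin fin c2 by (simp add: card_insert_disjoint)
qed



definition walk :: "ngraph \<Rightarrow> nat list \<Rightarrow> bool" where
  "walk E vs \<longleftrightarrow> (\<forall>i. Suc i < length vs \<longrightarrow> adj E (vs!i) (vs!Suc i))"

lemma simple_walk:
  assumes "connected_in E u v"
  shows "\<exists>vs. vs \<noteq> [] \<and> hd vs = u \<and> last vs = v \<and> distinct vs \<and> walk E vs"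
  using assms unfolding connected_in_def
proof (induction rule: rtranclp_induct)
  case base
  show ?case by (rule exI[of _ "[u]"]) (simp add: walk_def)
next
  case (step w v)
  then obtain vs where vs: "vs \<noteq> []" "hd vs = u" "last vs = w" "distinct vs" "walk E vs" by blast
  show ?case
  proof (cases "v \<in> set vs")
    case True
    then obtain j where j: "j < length vs" "vs ! j = v" by (auto simp: in_set_conv_nth)
    show ?thesis
    proof (rule exI[of _ "take (Suc j) vs"], intro conjI)
      show "take (Suc j) vs \<noteq> []" using vs(1) by simp
      show "hd (take (Suc j) vs) = u" using vs(2) by simp
      show "last (take (Suc j) vs) = v" using j by (simp add: take_Suc_conv_app_nth)
      show "distinct (take (Suc j) vs)" using vs(4) by simp
      show "walk E (take (Suc j) vs)" using vs(5) unfolding walk_def by auto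
    qed
  next
    case False
    show ?thesis
    proof (rule exI[of _ "vs @ [v]"], intro conjI)
      show "vs @ [v] \<noteq> []" by simp
      show "hd (vs @ [v]) = u" using vs by simp
      show "last (vs @ [v]) = v" by simp
      show "distinct (vs @ [v])" using vs(4) False by simp
      show "walk E (vs @ [v])" unfolding walk_def
      proof (intro allI impI)
        fix i assume i: "Suc i < length (vs @ [v])"
        show "adj E ((vs @ [v]) ! i) ((vs @ [v]) ! Suc i)"
        proof (cases "Suc i < length vs")
          case True
          then show ?thesis using vs(5) unfolding walk_def by (simp add: nth_append)
        next
          case False
          then have "Suc i = length vs" using i by simp
          moreover then have "vs ! i = w" using vs(1,3) by (metis diff_Suc_1 last_conv_nth)
          ultimately show ?thesis using step(2) by (simp add: nth_append)
        qed
      qed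
    qed
  qed
qed

lemma cycle_cons: "has_cycle E \<Longrightarrow> has_cycle (x#E)"
  unfolding has_cycle_def
proof (elim exE conjE)
  fix es vs
  assume h: "length es = length vs" "2 \<le> length es" "distinct es" "distinct vs"
    "\<forall>i\<in>set es. i < length E"
    "\<forall>i<length es. joins (E ! (es ! i)) (vs ! i) (vs ! ((i + 1) mod length es))"
  show "\<exists>es vs. length es = length vs \<and> 2 \<le> length es \<and> distinct es \<and> distinct vs \<and>
       (\<forall>i\<in>set es. i < length (x # E)) \<and>
       (\<forall>i<length es. joins ((x # E) ! (es ! i)) (vs ! i) (vs ! ((i + 1) mod length es)))"
    apply (rule exI[of _ "map Suc es"], rule exI[of _ vs])
    using h by (auto simp: distinct_map)
qed

lemma close_cycle:
  assumes ab: "a \<noteq> b" and c: "connected_in E a b"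
  shows "has_cycle ((a,b)#E)"
proof -
  from simple_walk[OF conn_sym[OF c]] obtain vs where
    vs: "vs \<noteq> []" "hd vs = b" "last vs = a" "distinct vs" "walk E vs" by blast
  define k where "k = length vs - 1"
  have lvs: "length vs = Suc k" using vs(1) k_def by simp
  have k1: "k \<ge> 1"
  proof (rule ccontr)
    assume "\<not> k \<ge> 1"
    then have "length vs = 1" using lvs by simp
    then have "hd vs = last vs" by (cases vs) auto
    then show False using vs ab by simp
  qed
  have v0: "vs ! 0 = b" using vs(1,2) by (simp add: hd_conv_nth)
  have vk: "vs ! k = a" using vs(1,3) lvs by (simp add: last_conv_nth)
  define idx where "idx i = (SOME j. j < length E \<and> joins (E ! j) (vs ! i) (vs ! Suc i))" for i
  have idx: "idx i < length E \<and> joins (E ! idx i) (vs ! i) (vs ! Suc i)" if "i < k" for i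
  proof -
    have "adj E (vs ! i) (vs ! Suc i)" using vs(5) that lvs unfolding walk_def by simp
    then obtain j where "j < length E" "joins (E ! j) (vs ! i) (vs ! Suc i)"
      unfolding adj_def by (auto simp: in_set_conv_nth)
    then show ?thesis unfolding idx_def by (rule someI[where P="\<lambda>j. j < length E \<and> joins (E ! j) (vs ! i) (vs ! Suc i)", OF conjI])
  qed
  have inj: "inj_on idx {0..<k}"
  proof (rule inj_onI)
    fix i j assume i: "i \<in> {0..<k}" and j: "j \<in> {0..<k}" and e: "idx i = idx j"
    show "i = j"
    proof (rule ccontr)
      assume ne: "i \<noteq> j"
      have ji: "joins (E ! idx i) (vs ! i) (vs ! Suc i)" "joins (E ! idx i) (vs ! j) (vs ! Suc j)"
        using idx[of i] idx[of j] i j unfolding e by auto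
      then have "(vs ! i = vs ! j \<and> vs ! Suc i = vs ! Suc j) \<or> (vs ! i = vs ! Suc j \<and> vs ! Suc i = vs ! j)"
        unfolding joins_def by auto
      moreover have "i < length vs" "j < length vs" "Suc i < length vs" "Suc j < length vs"
        using i j lvs by auto
      ultimately show False using vs(4) ne by (auto simp: nth_eq_iff_index_eq)
    qed
  qed
  define es where "es = map (\<lambda>i. Suc (idx i)) [0..<k] @ [0]"
  have les: "length es = Suc k" unfolding es_def by simp
  show ?thesis unfolding has_cycle_def
  proof (rule exI[of _ es], rule exI[of _ vs], intro conjI)
    show "length es = length vs" using les lvs by simp
    show "2 \<le> length es" using les k1 by simp
    show "distinct es" unfolding es_def using inj by (auto simp: distinct_map inj_on_def)
    show "distinct vs" by fact
    show "\<forall>i\<in>set es. i < length ((a, b) # E)" unfolding es_def using idx by auto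
    show "\<forall>i<length es. joins (((a, b) # E) ! (es ! i)) (vs ! i) (vs ! ((i + 1) mod length es))"
    proof (intro allI impI)
      fix i assume i: "i < length es"
      show "joins (((a, b) # E) ! (es ! i)) (vs ! i) (vs ! ((i + 1) mod length es))"
      proof (cases "i < k")
        case True
        then have "es ! i = Suc (idx i)" unfolding es_def by (simp add: nth_append)
        moreover have "(i + 1) mod length es = Suc i" using True les by simp
        ultimately show ?thesis using idx[OF True] by simp
      next
        case False
        then have ik: "i = k" using i les by simp
        then have "es ! i = 0" unfolding es_def by (simp add: nth_append)
        moreover have "(i + 1) mod length es = 0" using ik les by simp
        ultimately show ?thesis using ik v0 vk by (simp add: joins_def)
      qed
    qed
  qed
qed



lemma conn_nil: "connected_in [] u v \<longleftrightarrow> u = v"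
proof
  assume "connected_in [] u v"
  then show "u = v" unfolding connected_in_def
    by (induction rule: rtranclp_induct) (auto simp: adj_def)
qed (simp add: conn_refl)

lemma forest_count: "is_ngraph N E \<Longrightarrow> acyclic_graph E \<Longrightarrow> num_components N E + length E = N"
proof (induction E)
  case Nil
  have "CC N [] ` {1..N} = (\<lambda>x. {x}) ` {1..N}"
    unfolding CC_def conn_nil by auto
  moreover have "card ((\<lambda>x. {x}) ` {1..N}) = N"
    by (subst card_image) (auto simp: inj_on_def)
  ultimately show ?case by (simp add: num_eq)
next
  case (Cons x E)
  obtain a b where x: "x = (a,b)" by (cases x)
  have g: "is_ngraph N E" using Cons.prems(1) unfolding is_ngraph_def by auto
  have ac: "acyclic_graph E" using Cons.prems(2) cycle_cons unfolding acyclic_graph_def by blast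
  have ab: "a \<in> {1..N}" "b \<in> {1..N}" "a \<noteq> b" using Cons.prems(1) unfolding is_ngraph_def x by auto
  have nc: "\<not> connected_in E a b" using close_cycle ab(3) Cons.prems(2) unfolding acyclic_graph_def x by blast
  have "num_components N ((a,b)#E) + 1 = num_components N E"
    unfolding num_eq using quot_merge[OF ab(1,2) nc] .
  then show ?case using Cons.IH[OF g ac] x by simp
qed

lemma cycle_sub:
  assumes c: "has_cycle (map (nth E) I)" and d: "distinct I" and s: "\<forall>i\<in>set I. i < length E"
  shows "has_cycle E"
proof -
  from c obtain es vs where h: "length es = length vs" "2 \<le> length es" "distinct es" "distinct vs"
    "\<forall>i\<in>set es. i < length I"
    "\<forall>i<length es. joins (map (nth E) I ! (es ! i)) (vs ! i) (vs ! ((i + 1) mod length es))"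
    unfolding has_cycle_def by auto
  show ?thesis unfolding has_cycle_def
  proof (rule exI[of _ "map (nth I) es"], rule exI[of _ vs], intro conjI)
    show "length (map (nth I) es) = length vs" using h by simp
    show "2 \<le> length (map (nth I) es)" using h by simp
    have "inj_on (nth I) (set es)"
    proof (rule inj_onI)
      fix x y assume "x \<in> set es" "y \<in> set es" "I ! x = I ! y"
      then show "x = y" using h(5) d by (simp add: nth_eq_iff_index_eq)
    qed
    then show "distinct (map (nth I) es)" using h(3) by (simp add: distinct_map)
    show "distinct vs" by fact
    show "\<forall>i\<in>set (map (nth I) es). i < length E" using h(5) s by auto
    show "\<forall>i<length (map (nth I) es). joins (E ! (map (nth I) es ! i)) (vs ! i) (vs ! ((i + 1) mod length (map (nth I) es)))"
    proof (intro allI impI)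
      fix i assume i: "i < length (map (nth I) es)"
      then have "es ! i < length I" using h(5) by simp
      then have "map (nth E) I ! (es ! i) = E ! (map (nth I) es ! i)" using i by simp
      then show "joins (E ! (map (nth I) es ! i)) (vs ! i) (vs ! ((i + 1) mod length (map (nth I) es)))"
        using h(6) i by (metis length_map)
    qed
  qed
qed

lemma cycle_filter: "has_cycle (filter P E) \<Longrightarrow> has_cycle E"
proof -
  assume c: "has_cycle (filter P E)"
  have "filter P E = filter P (map (nth E) [0..<length E])" by (simp add: map_nth)
  also have "\<dots> = map (nth E) (filter (P \<circ> nth E) [0..<length E])" by (simp add: filter_map)
  finally have "has_cycle (map (nth E) (filter (P \<circ> nth E) [0..<length E]))" using c by simp
  moreover have "distinct (filter (P \<circ> nth E) [0..<length E])" by simp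
  moreover have "\<forall>i\<in>set (filter (P \<circ> nth E) [0..<length E]). i < length E" by simp
  ultimately show ?thesis by (rule cycle_sub)
qed

theorem lemma3p7:
  fixes m n s t :: nat and \<Gamma> :: ngraph
  assumes "1 \<le> m" and "1 \<le> n"
    and "is_ngraph (m + n - 1) \<Gamma>"
    and "acyclic_graph \<Gamma>"
    and "acyclic_graph (Delta0 m \<Gamma>)"
    and "num_components m (Delta1 m \<Gamma>) = s"
    and "num_components n (Delta0 m \<Gamma>) = t"
  shows "num_components (m + n - 1) \<Gamma> = s + t - 1"
proof -
  have g1: "is_ngraph m (Delta1 m \<Gamma>)" using assms(3) unfolding is_ngraph_def Delta1_def by auto
  have key: "clasp m a \<in> {1..n} \<and> clasp m b \<in> {1..n} \<and> clasp m a \<noteq> clasp m b"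
    if ab: "(a, b) \<in> set \<Gamma>" "\<not> (a \<le> m \<and> b \<le> m)" for a b
  proof -
    have "1 \<le> a" "a \<le> m + n - 1" "1 \<le> b" "b \<le> m + n - 1" "a \<noteq> b"
      using assms(3) ab(1) unfolding is_ngraph_def by auto
    then show ?thesis using ab(2) assms(1,2) unfolding clasp_def by auto
  qed
  have g0: "is_ngraph n (Delta0 m \<Gamma>)" unfolding is_ngraph_def Delta0_def
    using key by auto
  have a1: "acyclic_graph (Delta1 m \<Gamma>)" using assms(4) cycle_filter unfolding acyclic_graph_def Delta1_def by blast
  have eqf: "(\<lambda>(a,b). \<not> (a \<le> m \<and> b \<le> m)) = (\<lambda>x. \<not> (case x of (a,b) \<Rightarrow> a \<le> m \<and> b \<le> m))"
    by (auto simp: fun_eq_iff)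
  have len: "length (Delta1 m \<Gamma>) + length (Delta0 m \<Gamma>) = length \<Gamma>"
    unfolding Delta1_def Delta0_def length_map eqf by (rule sum_length_filter_compl)
  have e: "num_components (m + n - 1) \<Gamma> + length \<Gamma> = m + n - 1" using forest_count assms(3,4) by blast
  have e1: "s + length (Delta1 m \<Gamma>) = m" using forest_count[OF g1 a1] assms(6) by simp
  have e0: "t + length (Delta0 m \<Gamma>) = n" using forest_count[OF g0 assms(5)] assms(7) by simp
  show ?thesis using e e1 e0 len assms(1,2) by linarith
qed

end
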